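(* Let $\mathsf{Prop}$ be a non-empty set of propositions and $\mathsf{L}$ any fragment of $\mathsf{LTL}(\mathsf{Prop})$. Let $\mathcal{S}=(\mathcal{P},\mathcal{N})$ be a sample of words in $\mathcal{W}(\mathsf{Prop})$, each $w\in\mathcal{P}\cup\mathcal{N}$ given as $w=u_w\cdot v_w^\omega$ with $u_w,v_w\in(2^{\mathsf{Prop}})^*$, $u_wv_w\neq\varepsilon$. If there is an $\mathcal{S}$-separating $\mathsf{L}$-formula, then there is one of size at most $2^n$, where $n:=\sum_{w\in\mathcal{P}\cup\mathcal{N}}(|u_w|+|v_w|)$.
   Context: $\mathsf{LTL}(\mathsf{Prop})$-formulas: $\varphi::=p\mid\neg\varphi\mid\varphi\vee\varphi\mid\varphi\wedge\varphi\mid\mathbf{X}\varphi\mid\mathbf{F}\varphi\mid\mathbf{G}\varphi\mid\varphi\,\mathbf{U}\,\varphi$, $p\in\mathsf{Prop}$. A fragment is given by a subset of these operators; its formulas are those using only them. $\mathsf{sz}(\varphi)$ is the number of distinct subformulas. $\mathcal{W}(\mathsf{Prop})=\{u\cdot v^\omega: u,v\in(2^{\mathsf{Prop}})^*,\ u\cdot v\ne\varepsilon\}$, where for $v=\varepsilon$ this denotes the finite word $u$. For a word $w$, $|w|\in\mathbb{N}\cup\{\infty\}$ is its length, $w[j]$ its $j$-th letter and $w[j:]$ its suffix from position $j$. Semantics: $w\models p$ iff $p\in w[0]$; Boolean connectives as usual; $w\models\mathbf{X}\varphi$ iff $|w|\ge2$ and $w[1:]\models\varphi$; $w\models\mathbf{F}\varphi$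 iff $\exists j<|w|$, $w[j:]\models\varphi$; $w\models\mathbf{G}\varphi$ iff $\forall j<|w|$, $w[j:]\models\varphi$; $w\models\varphi_1\mathbf{U}\varphi_2$ iff $\exists j<|w|$ with $w[j:]\models\varphi_2$ and $w[k:]\models\varphi_1$ for all $k<j$. A sample is a pair of finite sets of words; a formula is $\mathcal{S}$-separating if satisfied by every word in $\mathcal{P}$ and by none in $\mathcal{N}$. *)

theory Defs
  imports Main "HOL-Library.Extended_Nat"
begin

datatype 'p ltl =
    Atom 'p
  | Neg "'p ltl"
  | Disj "'p ltl" "'p ltl"
  | Conj "'p ltl" "'p ltl"
  | Next "'p ltl"
  | Fin "'p ltl"
  | Glob "'p ltl"
  | Until "'p ltl" "'p ltl"

datatype ltl_op = OpNeg | OpOr | OpAnd | OpX | OpF | OpG | OpU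

fun ops :: "'p ltl \<Rightarrow> ltl_op set" where
  "ops (Atom p) = {}"
| "ops (Neg a) = insert OpNeg (ops a)"
| "ops (Disj a b) = insert OpOr (ops a \<union> ops b)"
| "ops (Conj a b) = insert OpAnd (ops a \<union> ops b)"
| "ops (Next a) = insert OpX (ops a)"
| "ops (Fin a) = insert OpF (ops a)"
| "ops (Glob a) = insert OpG (ops a)"
| "ops (Until a b) = insert OpU (ops a \<union> ops b)"

fun atoms :: "'p ltl \<Rightarrow> 'p set" where
  "atoms (Atom p) = {p}"
| "atoms (Neg a) = atoms a"
| "atoms (Disj a b) = atoms a \<union> atoms b"
| "atoms (Conj a b) = atoms a \<union> atoms b"
| "atoms (Next a) = atoms a"
| "atoms (Fin a) = atoms a"
| "atoms (Glob a) = atoms a"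
| "atoms (Until a b) = atoms a \<union> atoms b"

definition in_fragment :: "'p set \<Rightarrow> ltl_op set \<Rightarrow> 'p ltl \<Rightarrow> bool" where
  "in_fragment Prop L \<phi> \<longleftrightarrow> atoms \<phi> \<subseteq> Prop \<and> ops \<phi> \<subseteq> L"

fun subformulas :: "'p ltl \<Rightarrow> 'p ltl set" where
  "subformulas (Atom p) = {Atom p}"
| "subformulas (Neg a) = insert (Neg a) (subformulas a)"
| "subformulas (Disj a b) = insert (Disj a b) (subformulas a \<union> subformulas b)"
| "subformulas (Conj a b) = insert (Conj a b) (subformulas a \<union> subformulas b)"
| "subformulas (Next a) = insert (Next a) (subformulas a)"
| "subformulas (Fin a) = insert (Fin a) (subformulas a)"
| "subformulas (Glob a) = insert (Glob a) (subformulas a)"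
| "subformulas (Until a b) = insert (Until a b) (subformulas a \<union> subformulas b)"

definition sz :: "'p ltl \<Rightarrow> nat" where
  "sz \<phi> = card (subformulas \<phi>)"

text \<open>The word u \<cdot> v^\<omega> (the finite word u if v = []), represented by the pair (u, v).\<close>
definition wlen :: "'p set list \<Rightarrow> 'p set list \<Rightarrow> enat" where
  "wlen u v = (if v = [] then enat (length u) else \<infinity>)"

definition wletter :: "'p set list \<Rightarrow> 'p set list \<Rightarrow> nat \<Rightarrow> 'p set" where
  "wletter u v j = (if j < length u then u ! j else v ! ((j - length u) mod length v))"

fun sat :: "'p set list \<Rightarrow> 'p set list \<Rightarrow> nat \<Rightarrow> 'p ltl \<Rightarrow> bool" where
  "sat u v i (Atom p) = (p \<in> wletter u v i)"
| "sat u v i (Neg a) = (\<not> sat u v i a)"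
| "sat u v i (Disj a b) = (sat u v i a \<or> sat u v i b)"
| "sat u v i (Conj a b) = (sat u v i a \<and> sat u v i b)"
| "sat u v i (Next a) = (enat (i + 1) < wlen u v \<and> sat u v (i + 1) a)"
| "sat u v i (Fin a) = (\<exists>j. i \<le> j \<and> enat j < wlen u v \<and> sat u v j a)"
| "sat u v i (Glob a) = (\<forall>j. i \<le> j \<and> enat j < wlen u v \<longrightarrow> sat u v j a)"
| "sat u v i (Until a b) = (\<exists>j. i \<le> j \<and> enat j < wlen u v \<and> sat u v j b \<and>
                              (\<forall>k. i \<le> k \<and> k < j \<longrightarrow> sat u v k a))"

definition models :: "'p set list \<times> 'p set list \<Rightarrow> 'p ltl \<Rightarrow> bool" where
  "models w \<phi> = sat (fst w) (snd w) 0 \<phi>"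

definition is_word :: "'p set \<Rightarrow> 'p set list \<times> 'p set list \<Rightarrow> bool" where
  "is_word Prop w \<longleftrightarrow> fst w @ snd w \<noteq> [] \<and> set (fst w @ snd w) \<subseteq> Pow Prop"

definition separating ::
  "('p set list \<times> 'p set list) set \<Rightarrow> ('p set list \<times> 'p set list) set \<Rightarrow> 'p ltl \<Rightarrow> bool" where
  "separating P N \<phi> \<longleftrightarrow> (\<forall>w\<in>P. models w \<phi>) \<and> (\<forall>w\<in>N. \<not> models w \<phi>)"

end

theory Submission
  imports Defs
begin

primrec rp :: "'p ltl \<Rightarrow> 'p ltl \<Rightarrow> 'p ltl \<Rightarrow> 'p ltl" where
  "rp a b (Atom p) = (if Atom p = a then b else Atom p)"
| "rp a b (Neg x) = (if Neg x = a then b else Neg (rp a b x))"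
| "rp a b (Disj x y) = (if Disj x y = a then b else Disj (rp a b x) (rp a b y))"
| "rp a b (Conj x y) = (if Conj x y = a then b else Conj (rp a b x) (rp a b y))"
| "rp a b (Next x) = (if Next x = a then b else Next (rp a b x))"
| "rp a b (Fin x) = (if Fin x = a then b else Fin (rp a b x))"
| "rp a b (Glob x) = (if Glob x = a then b else Glob (rp a b x))"
| "rp a b (Until x y) = (if Until x y = a then b else Until (rp a b x) (rp a b y))"

lemma self_sub: "c \<in> subformulas c"
  by (cases c) auto

lemma rp_id: "a \<notin> subformulas c \<Longrightarrow> rp a b c = c"
  by (induction c) (auto simp: self_sub)

lemma rp_at: "rp a b a = b"
  by (cases a) auto

lemma sub_rp: "subformulas (rp a b c) \<subseteq> rp a b ` subformulas c \<union> subformulas b"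
  by (induction c) (auto simp: rp_at)

lemma sub_size: "c \<in> subformulas d \<Longrightarrow> c = d \<or> size c < size d"
  by (induction d) auto

lemma sub_trans: "c \<in> subformulas d \<Longrightarrow> subformulas c \<subseteq> subformulas d"
  by (induction d) auto

lemma sub_atoms_ops: "c \<in> subformulas d \<Longrightarrow> atoms c \<subseteq> atoms d \<and> ops c \<subseteq> ops d"
  by (induction d) auto

lemma rp_atoms_ops: "atoms (rp a b c) \<subseteq> atoms c \<union> atoms b \<and> ops (rp a b c) \<subseteq> ops c \<union> ops b"
  by (induction c) auto

lemma finite_sub: "finite (subformulas c)"
  by (induction c) auto

lemma rp_sat:
  assumes "\<forall>i. enat i < wlen u v \<longrightarrow> sat u v i a = sat u v i b"
  shows "enat i < wlen u v \<Longrightarrow> sat u v i (rp a b c) = sat u v i c"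
proof (induction c arbitrary: i)
  case (Until x y)
  have "\<And>k j. k < j \<Longrightarrow> enat j < wlen u v \<Longrightarrow> enat k < wlen u v"
    by (meson enat_ord_simps(2) order.strict_trans)
  then show ?case using Until assms by (auto simp: rp_at) (metis rp.simps(8))+
qed (use assms in auto)

lemma shift:
  assumes "v \<noteq> []"
  shows "(\<forall>k. wletter u v (i+k) = wletter u v (i'+k)) \<Longrightarrow> sat u v i c = sat u v i' c"
proof (induction c arbitrary: i i')
  case (Atom p)
  then show ?case using spec[OF Atom, of 0] by simp
next
  case (Next x)
  have "sat u v (i+1) x = sat u v (i'+1) x"
    by (rule Next.IH) (use Next.prems in \<open>metis add.assoc\<close>)
  then show ?case using assms by (simp add: wlen_def)
next
  case (Fin x)
  have h: "sat u v (i+d) x = sat u v (i'+d) x" for d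
    by (rule Fin.IH) (use Fin.prems in \<open>metis add.assoc\<close>)
  have "(\<exists>j\<ge>i. sat u v j x) = (\<exists>d. sat u v (i+d) x)" by (metis le_add1 le_add_diff_inverse)
  also have "\<dots> = (\<exists>d. sat u v (i'+d) x)" using h by simp
  also have "\<dots> = (\<exists>j\<ge>i'. sat u v j x)" by (metis le_add1 le_add_diff_inverse)
  finally show ?case using assms by (simp add: wlen_def)
next
  case (Glob x)
  have h: "sat u v (i+d) x = sat u v (i'+d) x" for d
    by (rule Glob.IH) (use Glob.prems in \<open>metis add.assoc\<close>)
  have "(\<forall>j\<ge>i. sat u v j x) = (\<forall>d. sat u v (i+d) x)" by (metis le_add1 le_add_diff_inverse)
  also have "\<dots> = (\<forall>d. sat u v (i'+d) x)" using h by simp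
  also have "\<dots> = (\<forall>j\<ge>i'. sat u v j x)" by (metis le_add1 le_add_diff_inverse)
  finally show ?case using assms by (simp add: wlen_def)
next
  case (Until x y)
  have hx: "sat u v (i+d) x = sat u v (i'+d) x" for d
    by (rule Until.IH) (use Until.prems in \<open>metis add.assoc\<close>)
  have hy: "sat u v (i+d) y = sat u v (i'+d) y" for d
    by (rule Until.IH) (use Until.prems in \<open>metis add.assoc\<close>)
  have e: "(\<exists>j\<ge>n. sat u v j y \<and> (\<forall>k. n \<le> k \<and> k < j \<longrightarrow> sat u v k x)) =
        (\<exists>d. sat u v (n+d) y \<and> (\<forall>e<d. sat u v (n+e) x))" for n
  proof
    assume "\<exists>j\<ge>n. sat u v j y \<and> (\<forall>k. n \<le> k \<and> k < j \<longrightarrow> sat u v k x)"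
    then obtain j where "j \<ge> n" "sat u v j y" "\<forall>k. n \<le> k \<and> k < j \<longrightarrow> sat u v k x" by blast
    then show "\<exists>d. sat u v (n+d) y \<and> (\<forall>e<d. sat u v (n+e) x)"
      by (intro exI[of _ "j-n"]) auto
  next
    assume "\<exists>d. sat u v (n+d) y \<and> (\<forall>e<d. sat u v (n+e) x)"
    then obtain d where "sat u v (n+d) y" "\<forall>e<d. sat u v (n+e) x" by blast
    then show "\<exists>j\<ge>n. sat u v j y \<and> (\<forall>k. n \<le> k \<and> k < j \<longrightarrow> sat u v k x)"
      by (intro exI[of _ "n+d"]) (auto, metis add_less_cancel_left le_add_diff_inverse)
  qed
  show ?case using assms e[of i] e[of i'] hx hy by (simp add: wlen_def)
qed auto

lemma small_equiv:
  assumes "\<forall>i < length u + length v. sat u v i a = sat u v i b"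
  shows "\<forall>i. enat i < wlen u v \<longrightarrow> sat u v i a = sat u v i b"
proof (intro allI impI)
  fix i assume i: "enat i < wlen u v"
  show "sat u v i a = sat u v i b"
  proof (cases "v = [] \<or> i < length u + length v")
    case True
    then show ?thesis using i assms by (auto simp: wlen_def)
  next
    case False
    define i' where "i' = length u + (i - length u) mod length v"
    have ii: "i' < length u + length v" using False by (simp add: i'_def)
    have L: "\<forall>k. wletter u v (i+k) = wletter u v (i'+k)"
      using False by (auto simp: wletter_def i'_def mod_add_left_eq)
    show ?thesis using shift[OF _ L, of a] shift[OF _ L, of b] False assms ii by auto
  qed
qed

theorem corollary2:
  fixes Prop :: "'p set" and L :: "ltl_op set"
    and P N :: "('p set list \<times> 'p set list) set"
  assumes "Prop \<noteq> {}"
    and "finite P" and "finite N"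
    and "\<forall>w \<in> P \<union> N. is_word Prop w"
    and "\<exists>\<phi>. in_fragment Prop L \<phi> \<and> separating P N \<phi>"
  shows "\<exists>\<phi>. in_fragment Prop L \<phi> \<and> separating P N \<phi> \<and>
           sz \<phi> \<le> 2 ^ (\<Sum>w \<in> P \<union> N. length (fst w) + length (snd w))"
proof -
  let ?Q = "\<lambda>\<phi>. in_fragment Prop L \<phi> \<and> separating P N \<phi>"
  obtain \<phi> where phi: "?Q \<phi>" and minl: "\<And>\<psi>. ?Q \<psi> \<Longrightarrow> sz \<phi> \<le> sz \<psi>"
    using assms(5) ex_has_least_nat[of ?Q _ sz] by blast
  define W where "W = P \<union> N"
  define T where "T = Sigma W (\<lambda>w. {..< length (fst w) + length (snd w)})"
  define sig where "sig = (\<lambda>\<psi>. {p \<in> T. sat (fst (fst p)) (snd (fst p)) (snd p) \<psi>})"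
  have finW: "finite W" using assms W_def by auto
  have finT: "finite T" unfolding T_def using finW by auto
  have cardT: "card T = (\<Sum>w \<in> P \<union> N. length (fst w) + length (snd w))"
    unfolding T_def W_def using finW W_def by (subst card_SigmaI) auto
  have inj: "inj_on sig (subformulas \<phi>)"
  proof (rule ccontr)
    assume "\<not> inj_on sig (subformulas \<phi>)"
    then obtain a b where ab: "a \<in> subformulas \<phi>" "b \<in> subformulas \<phi>" "a \<noteq> b"
      "sig a = sig b" "size b \<le> size a"
      unfolding inj_on_def by (metis nat_le_linear)
    have anb: "a \<notin> subformulas b" using sub_size ab by fastforce
    have eqv: "\<forall>i. enat i < wlen (fst w) (snd w) \<longrightarrow> sat (fst w) (snd w) i a = sat (fst w) (snd w) i b"
      if "w \<in> W" for w
    proof (rule small_equiv, intro allI impI)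
      fix i assume "i < length (fst w) + length (snd w)"
      then have "(w, i) \<in> T" using that T_def by auto
      then show "sat (fst w) (snd w) i a = sat (fst w) (snd w) i b"
        using ab(4) unfolding sig_def by (metis (no_types, lifting) fst_conv mem_Collect_eq snd_conv)
    qed
    define \<phi>' where "\<phi>' = rp a b \<phi>"
    have mod: "models w \<phi>' = models w \<phi>" if "w \<in> W" for w
    proof -
      have "fst w @ snd w \<noteq> []" using assms(4) that W_def is_word_def by blast
      then have "enat 0 < wlen (fst w) (snd w)" by (auto simp: wlen_def)
      then show ?thesis unfolding models_def \<phi>'_def using rp_sat[OF eqv[OF that]] by blast
    qed
    have frag: "in_fragment Prop L \<phi>'"
      using phi rp_atoms_ops[of a b \<phi>] sub_atoms_ops[OF ab(2)]
      unfolding in_fragment_def \<phi>'_def by blast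
    have sep: "separating P N \<phi>'" using phi mod unfolding separating_def W_def by auto
    have s1: "subformulas \<phi>' \<subseteq> rp a b ` subformulas \<phi>"
    proof -
      have "subformulas b = rp a b ` subformulas b"
        using anb sub_trans rp_id by (smt (verit, best) image_cong image_ident subsetD)
      also have "\<dots> \<subseteq> rp a b ` subformulas \<phi>" using sub_trans[OF ab(2)] by blast
      finally show ?thesis using sub_rp[of a b \<phi>] unfolding \<phi>'_def by blast
    qed
    also have "\<dots> = rp a b ` (subformulas \<phi> - {a})"
    proof (rule equalityI; rule subsetI)
      fix y assume "y \<in> rp a b ` subformulas \<phi>"
      then obtain x where x: "x \<in> subformulas \<phi>" "y = rp a b x" by blast
      show "y \<in> rp a b ` (subformulas \<phi> - {a})"
      proof (cases "x = a")
        case True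
        then have "y = rp a b b" using x rp_at[of a b] rp_id[OF anb] by simp
        then show ?thesis using ab by blast
      qed (use x in blast)
    qed blast
    finally have "sz \<phi>' \<le> card (subformulas \<phi> - {a})"
      unfolding sz_def by (meson card_image_le card_mono finite_Diff finite_imageI finite_sub order_trans)
    also have "\<dots> < sz \<phi>" unfolding sz_def using ab(1) finite_sub
      by (metis card_Diff1_less)
    finally show False using minl[of \<phi>'] frag sep by simp
  qed
  have "sz \<phi> \<le> card (Pow T)" unfolding sz_def
    by (rule card_inj_on_le[OF inj]) (auto simp: sig_def finT)
  then show ?thesis using phi cardT card_Pow[of T] finT by auto
qed

end
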